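(* Let $\Delta$ be a pure simplicial complex of dimension $m-1\ge2$ whose clique decomposition $\Delta=\Delta_1\cup\cdots\cup\Delta_r$ satisfies conditions (i) and (ii), such that each clique is a single $(m-1)$-simplex and $G_\Delta$ is the complete graph $K_r$. Then $\Delta$ is closed if and only if $m\ge r$.
   Context: $\Delta$ is a pure $(m-1)$-dimensional simplicial complex on $[n]$. Clique decomposition: let $\mathcal{S}$ be the set of simplices $\Gamma$ with vertices in $[n]$, $\dim\Gamma\ge m-1$, whose $(m-1)$-skeleton is contained in $\Delta$; the maximal elements $\Gamma_1,\dots,\Gamma_r$ of $\mathcal{S}$ give the cliques $\Delta_i=\Gamma_i^{(m-1)}$, $\Delta=\Delta_1\cup\cdots\cup\Delta_r$; $V(\Delta_i)$ is the vertex set of $\Delta_i$. Conditions: (i) $|V(\Delta_i)\cap V(\Delta_j)|\le1$ for all $i<j$; (ii) $V(\Delta_i)\cap V(\Delta_j)\cap V(\Delta_k)=\emptyset$ for all $i<j<k$. $G_\Delta$ is the simple graph on vertices $v_1,\dots,v_r$ with an edge $\{v_i,v_j\}$ ($i\ne j$) iff $V(\Delta_i)\cap V(\Delta_j)\ne\emptyset$. $\Delta$ is closed with respect to a labeling of its vertices by $[n]$ if for any two facets $F=\{a_1<\dots<a_m\}$, $G=\{b_1<\dots<b_m\}$ with $a_i=b_i$ for some $i$, every $m$-subset of $F\cup G$ is a facet of $\Delta$; $\Delta$ is closed if some labeling makes it closed. *)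

theory Defs
  imports Main
begin

text \<open>A pure (m-1)-dimensional simplicial complex on [n] = {1..n} is represented by
its set of facets F: a nonempty family of m-subsets of {1..n}.\<close>
definition pure_complex :: "nat \<Rightarrow> nat \<Rightarrow> nat set set \<Rightarrow> bool" where
  "pure_complex n m F \<longleftrightarrow> F \<noteq> {} \<and> (\<forall>A\<in>F. A \<subseteq> {1..n} \<and> card A = m)"

definition skel :: "nat \<Rightarrow> nat set \<Rightarrow> nat set set" where
  "skel m G = {A. A \<subseteq> G \<and> card A = m}"

definition simplS :: "nat \<Rightarrow> nat \<Rightarrow> nat set set \<Rightarrow> nat set set" where
  "simplS n m F = {G. G \<subseteq> {1..n} \<and> card G \<ge> m \<and> skel m G \<subseteq> F}"

definition maxsimp :: "nat \<Rightarrow> nat \<Rightarrow> nat set set \<Rightarrow> nat set set" where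
  "maxsimp n m F = {G \<in> simplS n m F. \<forall>H\<in>simplS n m F. G \<subseteq> H \<longrightarrow> H = G}"

definition cliques :: "nat \<Rightarrow> nat \<Rightarrow> nat set set \<Rightarrow> nat set set set" where
  "cliques n m F = skel m ` maxsimp n m F"

definition Vtx :: "nat set set \<Rightarrow> nat set" where
  "Vtx D = \<Union>D"

definition cond_i :: "nat \<Rightarrow> nat \<Rightarrow> nat set set \<Rightarrow> bool" where
  "cond_i n m F \<longleftrightarrow> (\<forall>Di\<in>cliques n m F. \<forall>Dj\<in>cliques n m F. Di \<noteq> Dj \<longrightarrow>
      card (Vtx Di \<inter> Vtx Dj) \<le> 1)"

definition cond_ii :: "nat \<Rightarrow> nat \<Rightarrow> nat set set \<Rightarrow> bool" where
  "cond_ii n m F \<longleftrightarrow> (\<forall>Di\<in>cliques n m F. \<forall>Dj\<in>cliques n m F. \<forall>Dk\<in>cliques n m F.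
      Di \<noteq> Dj \<and> Di \<noteq> Dk \<and> Dj \<noteq> Dk \<longrightarrow> Vtx Di \<inter> Vtx Dj \<inter> Vtx Dk = {})"

text \<open>G_Delta is the complete graph: any two distinct cliques share a vertex.\<close>
definition G_complete :: "nat \<Rightarrow> nat \<Rightarrow> nat set set \<Rightarrow> bool" where
  "G_complete n m F \<longleftrightarrow> (\<forall>Di\<in>cliques n m F. \<forall>Dj\<in>cliques n m F. Di \<noteq> Dj \<longrightarrow>
      Vtx Di \<inter> Vtx Dj \<noteq> {})"

text \<open>i-th smallest element (0-based) of a finite set of naturals.\<close>
definition ith :: "nat set \<Rightarrow> nat \<Rightarrow> nat" where
  "ith A i = sorted_list_of_set A ! i"

definition closed_wrt :: "nat \<Rightarrow> nat set set \<Rightarrow> bool" where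
  "closed_wrt m F \<longleftrightarrow> (\<forall>A\<in>F. \<forall>B\<in>F. (\<exists>i<m. ith A i = ith B i) \<longrightarrow>
      (\<forall>C. C \<subseteq> A \<union> B \<and> card C = m \<longrightarrow> C \<in> F))"

definition is_closed :: "nat \<Rightarrow> nat \<Rightarrow> nat set set \<Rightarrow> bool" where
  "is_closed n m F \<longleftrightarrow> (\<exists>\<sigma>. bij_betw \<sigma> {1..n} {1..n} \<and> closed_wrt m (image \<sigma> ` F))"

end

theory Submission imports Defs "HOL-Library.Product_Lexorder" begin


lemma rank_nth:
  fixes xs :: "nat list"
  assumes s: "sorted xs" and d: "distinct xs" and i: "i < length xs"
  shows "card {y \<in> set xs. y < xs!i} = i"
proof -
  have "{y \<in> set xs. y < xs!i} = (!) xs ` {0..<i}"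
  proof
    show "{y \<in> set xs. y < xs!i} \<subseteq> (!) xs ` {0..<i}"
    proof
      fix y assume "y \<in> {y \<in> set xs. y < xs!i}"
      then obtain j where j: "j < length xs" "y = xs!j" "y < xs!i" by (auto simp: in_set_conv_nth)
      have "j < i"
      proof (rule ccontr)
        assume "\<not> j < i" then have "xs!i \<le> xs!j" using s j by (simp add: sorted_nth_mono)
        then show False using j by simp
      qed
      then show "y \<in> (!) xs ` {0..<i}" using j by auto
    qed
  next
    show "(!) xs ` {0..<i} \<subseteq> {y \<in> set xs. y < xs!i}"
    proof
      fix y assume "y \<in> (!) xs ` {0..<i}"
      then obtain j where j: "j < i" "y = xs!j" by auto
      have "xs!j \<le> xs!i" using s j i by (simp add: sorted_nth_mono)
      moreover have "xs!j \<noteq> xs!i" using d j i by (simp add: nth_eq_iff_index_eq)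
      ultimately show "y \<in> {y \<in> set xs. y < xs!i}" using j i by auto
    qed
  qed
  moreover have "inj_on ((!) xs) {0..<i}" using d i by (auto simp: inj_on_def nth_eq_iff_index_eq)
  ultimately show ?thesis by (simp add: card_image)
qed

lemma ith_props:
  assumes "finite X" "i < card X"
  shows "ith X i \<in> X \<and> card {y \<in> X. y < ith X i} = i"
proof -
  let ?xs = "sorted_list_of_set X"
  have "i < length ?xs" using assms by simp
  then have "?xs ! i \<in> set ?xs" by simp
  moreover have "card {y \<in> set ?xs. y < ?xs!i} = i"
    by (rule rank_nth) (use assms in auto)
  ultimately show ?thesis using assms by (simp add: ith_def)
qed

lemma ith_eq:
  assumes "finite X" "x \<in> X" "card {y \<in> X. y < x} = i"
  shows "ith X i = x"
proof -
  let ?xs = "sorted_list_of_set X"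
  obtain j where j: "j < length ?xs" "?xs ! j = x" using assms by (metis in_set_conv_nth set_sorted_list_of_set)
  have "card {y \<in> set ?xs. y < ?xs!j} = j" by (rule rank_nth) (use j in auto)
  then have "j = i" using assms j by simp
  then show ?thesis using j by (simp add: ith_def)
qed

definition nice :: "nat \<Rightarrow> nat set set \<Rightarrow> bool" where
  "nice m G \<longleftrightarrow> (\<forall>A\<in>G. finite A \<and> card A = m) \<and> (\<forall>A\<in>G. \<forall>B\<in>G. A \<noteq> B \<longrightarrow> card (A \<inter> B) = 1)
     \<and> (\<forall>A\<in>G. \<forall>B\<in>G. \<forall>C\<in>G. A \<noteq> B \<and> A \<noteq> C \<and> B \<noteq> C \<longrightarrow> A \<inter> B \<inter> C = {})"

lemma bad_pair:
  assumes "nice m G" "m \<ge> 3" "A \<in> G" "B \<in> G" "A \<noteq> B"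
  shows "\<exists>C. C \<subseteq> A \<union> B \<and> card C = m \<and> C \<notin> G"
proof -
  have fA: "finite A" "card A = m" and fB: "finite B" "card B = m" and AB: "card (A \<inter> B) = 1"
    using assms unfolding nice_def by auto
  have "A - B \<noteq> {}"
  proof
    assume "A - B = {}" then have "A \<subseteq> A \<inter> B" by auto
    then have "card A \<le> card (A \<inter> B)" using fA by (metis card_mono finite_Int)
    then show False using AB fA assms by simp
  qed
  then obtain a where a: "a \<in> A" "a \<notin> B" by auto
  have "B - A \<noteq> {}"
  proof
    assume "B - A = {}" then have "B \<subseteq> A \<inter> B" by auto
    then have "card B \<le> card (A \<inter> B)" using fB by (metis card_mono finite_Int)
    then show False using AB fB assms by simp
  qed
  then obtain b where b: "b \<in> B" "b \<notin> A" by auto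
  let ?C = "insert b (A - {a})"
  have cC: "card ?C = m" using fA a b assms(2) by (simp add: card_Diff_singleton)
  moreover have "?C \<subseteq> A \<union> B" using b by auto
  moreover have "?C \<notin> G"
  proof
    assume CG: "?C \<in> G"
    have "?C \<noteq> A" using b by auto
    then have "card (?C \<inter> A) = 1" using assms CG unfolding nice_def by auto
    moreover have "A - {a} \<subseteq> ?C \<inter> A" by auto
    then have "card (A - {a}) \<le> card (?C \<inter> A)" using fA by (intro card_mono) auto
    ultimately show False using fA a assms(2) by (simp add: card_Diff_singleton)
  qed
  ultimately show ?thesis by blast
qed

lemma notclosed:
  assumes ni: "nice m G" and fG: "finite G" and m3: "m \<ge> 3" and cG: "card G > m"
  shows "\<not> closed_wrt m G"
proof
  assume cl: "closed_wrt m G"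
  have fin: "\<And>A. A \<in> G \<Longrightarrow> finite A \<and> card A = m" using ni unfolding nice_def by auto
  have ne: "G \<noteq> {}" using cG by auto
  then obtain A0 where "A0 \<in> G" by auto
  then have "A0 \<noteq> {}" using fin m3 by fastforce
  then have Une: "\<Union>G \<noteq> {}" using \<open>A0 \<in> G\<close> by auto
  have Ufin: "finite (\<Union>G)" using fG fin by auto
  define w where "w = Min (\<Union>G)"
  have "w \<in> \<Union>G" using Min_in[OF Ufin Une] w_def by simp
  then obtain A where A: "A \<in> G" "w \<in> A" by auto
  have wmin: "\<And>y. y \<in> \<Union>G \<Longrightarrow> w \<le> y" using Ufin w_def by simp
  have "\<exists>B\<in>G. B \<noteq> A \<and> w \<in> B"
  proof (rule ccontr)
    assume nB: "\<not> ?thesis"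
    define f where "f C = (SOME x. x \<in> A \<inter> C)" for C
    have fC: "f C \<in> A \<inter> C" if "C \<in> G - {A}" for C
    proof -
      have "card (A \<inter> C) = 1" using ni that A unfolding nice_def by auto
      then have "A \<inter> C \<noteq> {}" by auto
      then show ?thesis unfolding f_def by (metis ex_in_conv someI)
    qed
    have "inj_on f (G - {A})"
    proof (rule inj_onI)
      fix C C' assume C: "C \<in> G - {A}" and C': "C' \<in> G - {A}" and eq: "f C = f C'"
      show "C = C'"
      proof (rule ccontr)
        assume "C \<noteq> C'"
        have tri: "\<forall>A\<in>G. \<forall>B\<in>G. \<forall>C\<in>G. A \<noteq> B \<and> A \<noteq> C \<and> B \<noteq> C \<longrightarrow> A \<inter> B \<inter> C = {}"
          using ni unfolding nice_def by simp
        have CA: "C \<noteq> A" "C' \<noteq> A" "C \<in> G" "C' \<in> G" using C C' by auto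
        then have "A \<inter> C \<inter> C' = {}" using tri A(1) \<open>C \<noteq> C'\<close> by blast
        then show False using fC[OF C] fC[OF C'] eq by auto
      qed
    qed
    moreover have "f ` (G - {A}) \<subseteq> A - {w}" using fC nB by fastforce
    ultimately have "card (G - {A}) \<le> card (A - {w})" using fin[OF A(1)] by (intro card_inj_on_le) auto
    then show False using cG fin[OF A(1)] A fG m3 by (simp add: card_Diff_singleton)
  qed
  then obtain B where B: "B \<in> G" "B \<noteq> A" "w \<in> B" by auto
  have "{y \<in> A. y < w} = {}" using wmin A by fastforce
  then have iA: "ith A 0 = w" using A fin by (intro ith_eq) auto
  have "{y \<in> B. y < w} = {}" using wmin B by fastforce
  then have iB: "ith B 0 = w" using B fin by (intro ith_eq) auto
  obtain C where C: "C \<subseteq> A \<union> B" "card C = m" "C \<notin> G" using bad_pair[OF ni m3 B(1) A(1)] B by blast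
  have "C \<in> G" using cl A(1) B(1) iA iB C m3 unfolding closed_wrt_def by (metis gr0I not_numeral_le_zero)
  then show False using C by simp
qed

lemma nice_image:
  assumes ni: "nice m F" and inj: "inj_on \<sigma> (\<Union>F)"
  shows "nice m ((`) \<sigma> ` F) \<and> card ((`) \<sigma> ` F) = card F"
proof -
  have i2: "inj_on ((`) \<sigma>) F"
    by (rule inj_onI) (metis Sup_upper inj inj_on_image_eq_iff)
  have ci: "card (\<sigma> ` A) = card A" if "A \<in> F" for A
    using inj that by (meson Sup_upper card_image inj_on_subset)
  have ii: "\<sigma> ` A \<inter> \<sigma> ` B = \<sigma> ` (A \<inter> B)" if "A \<in> F" "B \<in> F" for A B
    using inj that by (simp add: Sup_upper inj_on_image_Int)
  have p1: "\<forall>A'\<in>(`) \<sigma> ` F. finite A' \<and> card A' = m"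
  proof
    fix A' assume "A' \<in> (`) \<sigma> ` F" 
    then obtain A where AF: "A \<in> F" and AA: "A' = \<sigma> ` A" by auto
    have "finite A \<and> card A = m" using ni AF unfolding nice_def by auto
    then show "finite A' \<and> card A' = m"
      using ci[OF AF] AA by auto
  qed
  have p2: "\<forall>A'\<in>(`) \<sigma> ` F. \<forall>B'\<in>(`) \<sigma> ` F. A' \<noteq> B' \<longrightarrow> card (A' \<inter> B') = 1"
  proof (intro ballI impI)
    fix A' B' assume "A' \<in> (`) \<sigma> ` F" "B' \<in> (`) \<sigma> ` F" "A' \<noteq> B'"
    then obtain A B where "A \<in> F" "B \<in> F" "A' = \<sigma> ` A" "B' = \<sigma> ` B" "A \<noteq> B" by auto
    moreover have "inj_on \<sigma> (A \<inter> B)" by (rule inj_on_subset[OF inj]) (use \<open>A \<in> F\<close> in auto)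
    ultimately show "card (A' \<inter> B') = 1" using ii ni unfolding nice_def
      by (simp add: card_image)
  qed
  have p3: "\<forall>A'\<in>(`) \<sigma> ` F. \<forall>B'\<in>(`) \<sigma> ` F. \<forall>C'\<in>(`) \<sigma> ` F. A' \<noteq> B' \<and> A' \<noteq> C' \<and> B' \<noteq> C' \<longrightarrow> A' \<inter> B' \<inter> C' = {}"
  proof (intro ballI impI)
    fix A' B' C' assume as: "A' \<in> (`) \<sigma> ` F" "B' \<in> (`) \<sigma> ` F" "C' \<in> (`) \<sigma> ` F" and ds: "A' \<noteq> B' \<and> A' \<noteq> C' \<and> B' \<noteq> C'"
    from as obtain A B C where abc: "A \<in> F" "B \<in> F" "C \<in> F" "A' = \<sigma> ` A" "B' = \<sigma> ` B" "C' = \<sigma> ` C"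
      by blast
    have "A \<noteq> B" "A \<noteq> C" "B \<noteq> C" using abc ds by auto
    note abc this
    moreover have "\<sigma> ` (A \<inter> B) \<inter> \<sigma> ` C = \<sigma> ` (A \<inter> B \<inter> C)"
      using inj \<open>A \<in> F\<close> \<open>C \<in> F\<close> by (intro inj_on_image_Int[symmetric]) auto
    ultimately show "A' \<inter> B' \<inter> C' = {}" using ii ni unfolding nice_def by auto
  qed
  have "nice m ((`) \<sigma> ` F)" unfolding nice_def using p1 p2 p3 by blast
  then show ?thesis using i2 by (simp add: card_image)
qed



lemma rank_bij:
  fixes key :: "nat \<Rightarrow> 'b::linorder"
  assumes inj: "inj_on key {1..n}"
  shows "bij_betw (\<lambda>x. Suc (card {y\<in>{1..n}. key y < key x})) {1..n} {1..n} \<and>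
    (\<forall>x\<in>{1..n}. \<forall>y\<in>{1..n}. Suc (card {z\<in>{1..n}. key z < key x}) < Suc (card {z\<in>{1..n}. key z < key y}) \<longleftrightarrow> key x < key y)"
proof -
  define \<sigma> where "\<sigma> x = Suc (card {y\<in>{1..n}. key y < key x})" for x
  have mono: "\<sigma> x < \<sigma> y" if "x \<in> {1..n}" "y \<in> {1..n}" "key x < key y" for x y
  proof -
    have "{z\<in>{1..n}. key z < key x} \<subset> {z\<in>{1..n}. key z < key y}"
      using that by auto
    then have "card {z\<in>{1..n}. key z < key x} < card {z\<in>{1..n}. key z < key y}"
      by (intro psubset_card_mono) auto
    then show ?thesis unfolding \<sigma>_def by simp
  qed
  have iff: "\<sigma> x < \<sigma> y \<longleftrightarrow> key x < key y" if "x \<in> {1..n}" "y \<in> {1..n}" for x y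
  proof
    assume a: "\<sigma> x < \<sigma> y"
    show "key x < key y"
    proof (rule ccontr)
      assume "\<not> key x < key y"
      then consider "key x = key y" | "key y < key x" by fastforce
      then show False
      proof cases
        case 1 then have "x = y" using inj that by (meson inj_onD)
        then show False using a by simp
      next
        case 2 then show False using mono[OF that(2,1)] a by simp
      qed
    qed
  qed (use mono that in auto)
  have injs: "inj_on \<sigma> {1..n}"
  proof (rule inj_onI)
    fix x y assume xy: "x \<in> {1..n}" "y \<in> {1..n}" "\<sigma> x = \<sigma> y"
    show "x = y"
    proof (rule ccontr)
      assume "x \<noteq> y" then have "key x \<noteq> key y" using inj xy by (meson inj_onD)
      then have "key x < key y \<or> key y < key x" by auto
      then show False using mono xy by fastforce
    qed
  qed
  have "\<sigma> ` {1..n} \<subseteq> {1..n}"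
  proof
    fix z assume "z \<in> \<sigma> ` {1..n}"
    then obtain x where x: "x \<in> {1..n}" "z = \<sigma> x" by auto
    have "{y\<in>{1..n}. key y < key x} \<subseteq> {1..n} - {x}" by auto
    then have "card {y\<in>{1..n}. key y < key x} \<le> card ({1..n} - {x})" by (intro card_mono) auto
    then show "z \<in> {1..n}" using x unfolding \<sigma>_def by auto
  qed
  then have "\<sigma> ` {1..n} = {1..n}" using injs by (intro endo_inj_surj) auto
  then have "bij_betw \<sigma> {1..n} {1..n}" using injs by (simp add: bij_betw_def)
  then show ?thesis using iff unfolding \<sigma>_def by auto
qed

lemma count_shared:
  assumes ni: "nice m F" and AF: "A \<in> F"
  shows "card {y\<in>A. \<exists>C\<in>F. C \<noteq> A \<and> y \<in> C \<and> Q C} = card {C\<in>F. C \<noteq> A \<and> Q C}"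
proof -
  define f where "f C = (SOME x. x \<in> A \<inter> C)" for C
  have fC: "f C \<in> A \<inter> C" if "C \<in> F" "C \<noteq> A" for C
  proof -
    have "card (A \<inter> C) = 1" using ni that AF unfolding nice_def by auto
    then have "A \<inter> C \<noteq> {}" by auto
    then show ?thesis unfolding f_def by (metis ex_in_conv someI)
  qed
  have tri: "\<forall>A\<in>F. \<forall>B\<in>F. \<forall>C\<in>F. A \<noteq> B \<and> A \<noteq> C \<and> B \<noteq> C \<longrightarrow> A \<inter> B \<inter> C = {}"
    using ni unfolding nice_def by simp
  have "bij_betw f {C\<in>F. C \<noteq> A \<and> Q C} {y\<in>A. \<exists>C\<in>F. C \<noteq> A \<and> y \<in> C \<and> Q C}"
    unfolding bij_betw_def
  proof
    show "inj_on f {C\<in>F. C \<noteq> A \<and> Q C}"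
    proof (rule inj_onI)
      fix C C' assume C: "C \<in> {C\<in>F. C \<noteq> A \<and> Q C}" and C': "C' \<in> {C\<in>F. C \<noteq> A \<and> Q C}" and eq: "f C = f C'"
      show "C = C'"
      proof (rule ccontr)
        assume "C \<noteq> C'"
        then have "A \<inter> C \<inter> C' = {}" using tri AF C C' by blast
        then show False using fC[of C] fC[of C'] C C' eq by auto
      qed
    qed
  next
    show "f ` {C\<in>F. C \<noteq> A \<and> Q C} = {y\<in>A. \<exists>C\<in>F. C \<noteq> A \<and> y \<in> C \<and> Q C}"
    proof
      show "f ` {C\<in>F. C \<noteq> A \<and> Q C} \<subseteq> {y\<in>A. \<exists>C\<in>F. C \<noteq> A \<and> y \<in> C \<and> Q C}"
        using fC by blast
    next
      show "{y\<in>A. \<exists>C\<in>F. C \<noteq> A \<and> y \<in> C \<and> Q C} \<subseteq> f ` {C\<in>F. C \<noteq> A \<and> Q C}"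
      proof
        fix y assume "y \<in> {y\<in>A. \<exists>C\<in>F. C \<noteq> A \<and> y \<in> C \<and> Q C}"
        then obtain C where C: "C \<in> F" "C \<noteq> A" "y \<in> C" "Q C" "y \<in> A" by blast
        have c1: "card (A \<inter> C) = 1" using ni C AF unfolding nice_def by auto
        have "y \<in> A \<inter> C" "f C \<in> A \<inter> C" using C fC by auto
        then have "y = f C" using c1 by (metis card_1_singletonE singletonD)
        then show "y \<in> f ` {C\<in>F. C \<noteq> A \<and> Q C}" using C by blast
      qed
    qed
  qed
  then show ?thesis by (simp add: bij_betw_same_card)
qed



lemma construct:
  assumes ni: "nice m F" and fF: "finite F" and sub: "\<forall>A\<in>F. A \<subseteq> {1..n}" and mr: "card F \<le> m"
  shows "\<exists>\<sigma>. bij_betw \<sigma> {1..n} {1..n} \<and> closed_wrt m ((`) \<sigma> ` F)"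
proof -
  obtain idx where "bij_betw idx F {0..<card F}" using ex_bij_betw_finite_nat[OF fF] by blast
  then have injx: "inj_on idx F" by (simp add: bij_betw_def)
  have fin: "finite A" "card A = m" if "A \<in> F" for A using ni that unfolding nice_def by auto
  have c1: "card (A \<inter> B) = 1" if "A \<in> F" "B \<in> F" "A \<noteq> B" for A B using ni that unfolding nice_def by auto
  have tri: "\<forall>A\<in>F. \<forall>B\<in>F. \<forall>C\<in>F. A \<noteq> B \<and> A \<noteq> C \<and> B \<noteq> C \<longrightarrow> A \<inter> B \<inter> C = {}"
    using ni unfolding nice_def by simp
  define S where "S x = {A\<in>F. x \<in> A}" for x
  define key where "key x = (if S x = {} then card F else Min (idx ` S x),
      if card (S x) \<ge> 2 then 1::nat else 0, x)" for x
  have S2: "S y = {A, C}" if "A \<in> F" "C \<in> F" "A \<noteq> C" "y \<in> A" "y \<in> C" for A C y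
  proof -
    have "D \<in> {A, C}" if "D \<in> F" "y \<in> D" for D
      using tri \<open>A \<in> F\<close> \<open>C \<in> F\<close> \<open>A \<noteq> C\<close> \<open>y \<in> A\<close> \<open>y \<in> C\<close> that by blast
    then show ?thesis using that unfolding S_def by auto
  qed
  have key2: "key y = (min (idx A) (idx C), 1, y)" if "A \<in> F" "C \<in> F" "A \<noteq> C" "y \<in> A" "y \<in> C" for A C y
    using S2[OF that] that unfolding key_def by auto
  have key1: "key y = (idx A, 0, y)" if "A \<in> F" "y \<in> A" "\<forall>C\<in>F. C \<noteq> A \<longrightarrow> y \<notin> C" for A y
  proof -
    have "S y = {A}" using that unfolding S_def by auto
    then show ?thesis unfolding key_def by simp
  qed
  have injk: "inj_on key {1..n}" by (rule inj_onI) (simp add: key_def)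
  define \<sigma> where "\<sigma> = (\<lambda>x. Suc (card {y\<in>{1..n}. key y < key x}))"
  note rb = rank_bij[OF injk]
  have bij: "bij_betw \<sigma> {1..n} {1..n}" using rb[THEN conjunct1] unfolding \<sigma>_def .
  have mono: "\<sigma> x < \<sigma> y \<longleftrightarrow> key x < key y" if "x \<in> {1..n}" "y \<in> {1..n}" for x y
    using rb[THEN conjunct2] that unfolding \<sigma>_def by blast
  have injs: "inj_on \<sigma> {1..n}" using bij by (simp add: bij_betw_def)
  have rd: "card {y\<in>B. key y < key v} < card {y\<in>A. key y < key v}"
    if AB: "A \<in> F" "B \<in> F" "A \<noteq> B" "v \<in> A" "v \<in> B" "idx A < idx B" for A B v
  proof -
    have kv: "key v = (idx A, 1, v)" using key2[OF AB(1-5)] AB(6) by simp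
    have sub1: "{y\<in>B. key y < key v} \<subseteq> {y\<in>B. \<exists>C\<in>F. C \<noteq> B \<and> y \<in> C \<and> idx C < idx A}"
    proof
      fix y assume y: "y \<in> {y\<in>B. key y < key v}"
      show "y \<in> {y\<in>B. \<exists>C\<in>F. C \<noteq> B \<and> y \<in> C \<and> idx C < idx A}"
      proof (cases "\<exists>C\<in>F. C \<noteq> B \<and> y \<in> C")
        case True
        then obtain C where C: "C \<in> F" "C \<noteq> B" "y \<in> C" by blast
        have ky: "key y = (min (idx B) (idx C), 1, y)" using key2[OF AB(2) C(1) C(2)[symmetric]] y C by auto
        have "idx C < idx A"
        proof (rule ccontr)
          assume na: "\<not> idx C < idx A"
          have "min (idx B) (idx C) = idx A \<and> y < v" using y ky kv na AB(6) by (auto simp: min_def split: if_splits)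
          then have "idx C = idx A" "y < v" using AB(6) by (auto simp: min_def split: if_splits)
          then have "C = A" using injx C(1) AB(1) by (meson inj_onD)
          then have "y \<in> A \<inter> B" "v \<in> A \<inter> B" using C y AB by auto
          then have "y = v" using c1[OF AB(1-3)] by (metis card_1_singletonE singletonD)
          then show False using \<open>y < v\<close> by simp
        qed
        then show ?thesis using C y by blast
      next
        case False
        then have "key y = (idx B, 0, y)" using key1[OF AB(2)] y by auto
        then show ?thesis using y kv AB(6) by auto
      qed
    qed
    have cB: "card {y\<in>B. key y < key v} \<le> card {C\<in>F. C \<noteq> B \<and> idx C < idx A}"
      using card_mono[OF _ sub1] fin[OF AB(2)] count_shared[OF ni AB(2), of "\<lambda>C. idx C < idx A"] by simp
    have e1: "{C\<in>F. C \<noteq> B \<and> idx C < idx A} = {C\<in>F. idx C < idx A}" using AB(6) by auto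
    have e2: "{C\<in>F. C \<noteq> A \<and> idx C < idx A} = {C\<in>F. idx C < idx A}" by auto
    have "card {y\<in>A. \<exists>C\<in>F. C \<noteq> A \<and> y \<in> C \<and> True} = card {C\<in>F. C \<noteq> A \<and> True}"
      by (rule count_shared[OF ni AB(1)])
    also have "\<dots> = card F - 1" proof -
      have "{C\<in>F. C \<noteq> A \<and> True} = F - {A}" by auto
      then show ?thesis using AB(1) fF by (simp add: card_Diff_singleton)
    qed
    finally have T0: "card {y\<in>A. \<exists>C\<in>F. C \<noteq> A \<and> y \<in> C} = card F - 1" by simp
    have "card F > 0" using AB(1) fF card_gt_0_iff by blast
    then have "card {y\<in>A. \<exists>C\<in>F. C \<noteq> A \<and> y \<in> C} < card A" using T0 fin(2)[OF AB(1)] mr by linarith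
    then have "{y\<in>A. \<exists>C\<in>F. C \<noteq> A \<and> y \<in> C} \<noteq> A" by auto
    then obtain p where p: "p \<in> A" "\<forall>C\<in>F. C \<noteq> A \<longrightarrow> p \<notin> C" by blast
    have kp: "key p = (idx A, 0, p)" using key1[OF AB(1) p] .
    let ?T = "{y\<in>A. \<exists>C\<in>F. C \<noteq> A \<and> y \<in> C \<and> idx C < idx A}"
    have sub2: "insert p ?T \<subseteq> {y\<in>A. key y < key v}"
    proof
      fix y assume "y \<in> insert p ?T"
      then consider "y = p" | C where "C \<in> F" "C \<noteq> A" "y \<in> C" "idx C < idx A" "y \<in> A" by blast
      then show "y \<in> {y\<in>A. key y < key v}"
      proof cases
        case 1 then show ?thesis using kp kv p by simp
      next
        case 2
        then have "key y = (min (idx A) (idx C), 1, y)" using key2[OF AB(1) 2(1) 2(2)[symmetric]] by auto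
        then show ?thesis using kv 2 by simp
      qed
    qed
    have "p \<notin> ?T" using p by blast
    then have "card (insert p ?T) = card ?T + 1" using fin[OF AB(1)] by simp
    moreover have "card ?T = card {C\<in>F. idx C < idx A}" using count_shared[OF ni AB(1)] e2 by simp
    moreover have "card (insert p ?T) \<le> card {y\<in>A. key y < key v}"
      using card_mono[OF _ sub2] fin[OF AB(1)] by simp
    ultimately show ?thesis using cB e1 by simp
  qed
  have rk: "card {y\<in>\<sigma> ` A. y < \<sigma> v} = card {y\<in>A. key y < key v}" if "A \<in> F" "v \<in> A" for A v
  proof -
    have As: "A \<subseteq> {1..n}" using sub that by auto
    have m2: "\<sigma> y < \<sigma> v \<longleftrightarrow> key y < key v" if "y \<in> A" for y
      using mono[of y v] As that \<open>v \<in> A\<close> by blast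
    have "{y\<in>\<sigma> ` A. y < \<sigma> v} = \<sigma> ` {y\<in>A. key y < key v}"
      using m2 by auto
    moreover have "inj_on \<sigma> {y\<in>A. key y < key v}" by (rule inj_on_subset[OF injs]) (use As in auto)
    ultimately show ?thesis by (simp add: card_image)
  qed
  have "closed_wrt m ((`) \<sigma> ` F)"
    unfolding closed_wrt_def
  proof (intro ballI impI allI)
    fix A' B' C assume A': "A' \<in> (`) \<sigma> ` F" and B': "B' \<in> (`) \<sigma> ` F"
      and ex: "\<exists>i<m. ith A' i = ith B' i" and C: "C \<subseteq> A' \<union> B' \<and> card C = m"
    obtain A B where AB: "A \<in> F" "B \<in> F" "A' = \<sigma> ` A" "B' = \<sigma> ` B" using A' B' by blast
    obtain i where i: "i < m" "ith A' i = ith B' i" using ex by blast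
    have As: "A \<subseteq> {1..n}" "B \<subseteq> {1..n}" using sub AB by auto
    have cA: "card A' = m" "finite A'" using AB fin card_image[OF inj_on_subset[OF injs As(1)]] by auto
    have cB: "card B' = m" "finite B'" using AB fin card_image[OF inj_on_subset[OF injs As(2)]] by auto
    show "C \<in> (`) \<sigma> ` F"
    proof (cases "A = B")
      case True
      then have "C \<subseteq> A'" using C AB by auto
      then have "C = A'" using C cA by (metis card_subset_eq)
      then show ?thesis using A' by simp
    next
      case False
      have hA: "ith A' i \<in> A' \<and> card {y \<in> A'. y < ith A' i} = i" using ith_props[of A' i] cA i by simp
      have hB: "ith B' i \<in> B' \<and> card {y \<in> B'. y < ith B' i} = i" using ith_props[of B' i] cB i by simp
      obtain v where v: "v \<in> A" "ith A' i = \<sigma> v" using hA AB by auto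
      obtain v' where v': "v' \<in> B" "ith B' i = \<sigma> v'" using hB AB by auto
      have "v = v'" using injs As v v' i by (metis inj_onD subsetD)
      then have vB: "v \<in> B" using v' by simp
      have r1: "card {y\<in>A. key y < key v} = i" using hA rk[OF AB(1) v(1)] v AB by simp
      have r2: "card {y\<in>B. key y < key v} = i" using hB rk[OF AB(2) vB] v i AB by simp
      have "idx A \<noteq> idx B" using False injx AB by (meson inj_onD)
      then have "idx A < idx B \<or> idx B < idx A" by auto
      then show ?thesis
      proof
        assume "idx A < idx B"
        then show ?thesis using rd[OF AB(1,2) False v(1) vB] r1 r2 by simp
      next
        assume "idx B < idx A"
        then show ?thesis using rd[OF AB(2,1) _ vB v(1)] False r1 r2 by simp
      qed
    qed
  qed
  then show ?thesis using bij by blast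
qed



theorem corollary3p5:
  fixes n m :: nat and F :: "nat set set"
  assumes "pure_complex n m F"
    and "m \<ge> 3"
    and "cond_i n m F"
    and "cond_ii n m F"
    and "\<forall>D\<in>cliques n m F. card D = 1"
    and "G_complete n m F"
  shows "is_closed n m F \<longleftrightarrow> m \<ge> card (cliques n m F)"
proof -
  note pc = assms(1)[unfolded pure_complex_def]
  have m3: "m \<ge> 3" by fact
  have Fsub: "\<And>A. A \<in> F \<Longrightarrow> A \<subseteq> {1..n} \<and> card A = m" using pc by auto
  have "F \<subseteq> Pow {1..n}" using Fsub by auto
  then have fF: "finite F" by (rule finite_subset) simp
  have skelA: "skel m A = {A}" if "A \<subseteq> {1..n}" "card A = m" for A
  proof -
    have "finite A" using that finite_subset by blast
    then show ?thesis unfolding skel_def using that by (auto dest: card_subset_eq)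
  qed
  have fS: "finite (simplS n m F)" unfolding simplS_def
    by (rule finite_subset[of _ "Pow {1..n}"]) auto
  have maxcard: "card G = m" if G: "G \<in> maxsimp n m F" for G
  proof -
    have Gs: "G \<subseteq> {1..n}" "card G \<ge> m" "skel m G \<subseteq> F" using G unfolding maxsimp_def simplS_def by auto
    have fG: "finite G" using finite_subset[OF Gs(1)] by simp
    have "skel m G \<in> cliques n m F" using G unfolding cliques_def by auto
    then have c1: "card (skel m G) = 1" using assms(5) by auto
    show ?thesis
    proof (rule ccontr)
      assume "card G \<noteq> m"
      then have lt: "m < card G" using Gs by simp
      obtain A where A: "A \<subseteq> G" "card A = m" "finite A" using obtain_subset_with_card_n[OF Gs(2)] by blast
      have "G - A \<noteq> {}"
      proof
        assume "G - A = {}" then have "G = A" using A by auto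
        then show False using lt A by simp
      qed
      then obtain x where x: "x \<in> G" "x \<notin> A" by auto
      have "A \<noteq> {}" using A m3 by (metis card.empty not_numeral_le_zero)
      then obtain y where y: "y \<in> A" by auto
      let ?A' = "insert x (A - {y})"
      have "card ?A' = m" using A x y m3 by (simp add: card_Diff_singleton)
      then have m1: "?A' \<in> skel m G" using A x y unfolding skel_def by blast
      have m2: "A \<in> skel m G" using A unfolding skel_def by blast
      have ne: "?A' \<noteq> A" using x by blast
      have "skel m G \<subseteq> Pow G" unfolding skel_def by blast
      then have fsk: "finite (skel m G)" by (rule finite_subset) (simp add: fG)
      have "{A, ?A'} \<subseteq> skel m G" using m1 m2 by blast
      then have "card {A, ?A'} \<le> card (skel m G)" using fsk by (rule card_mono[rotated])
      moreover have "card {A, ?A'} = 2" using ne by (simp add: card_insert_if)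
      ultimately show False using c1 by linarith
    qed
  qed
  have msF: "maxsimp n m F = F"
  proof
    show "maxsimp n m F \<subseteq> F"
    proof
      fix G assume G: "G \<in> maxsimp n m F"
      have Gs: "G \<subseteq> {1..n}" "skel m G \<subseteq> F" using G unfolding maxsimp_def simplS_def by auto
      then show "G \<in> F" using skelA[OF Gs(1) maxcard[OF G]] by simp
    qed
  next
    show "F \<subseteq> maxsimp n m F"
    proof
      fix A assume AF: "A \<in> F"
      have AS: "A \<in> simplS n m F" using Fsub[OF AF] skelA AF unfolding simplS_def by auto
      have "\<forall>H\<in>simplS n m F. A \<subseteq> H \<longrightarrow> H = A"
      proof (intro ballI impI)
        fix H assume H: "H \<in> simplS n m F" "A \<subseteq> H"
        obtain M where M: "M \<in> simplS n m F" "H \<subseteq> M" "\<forall>b\<in>simplS n m F. M \<subseteq> b \<longrightarrow> M = b"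
          using finite_has_maximal2[OF fS H(1)] by blast
        have "M \<in> maxsimp n m F" using M unfolding maxsimp_def by auto
        then have "card M = m" by (rule maxcard)
        moreover have "finite M" using M(1) unfolding simplS_def using finite_subset by blast
        moreover have "A \<subseteq> M" using H(2) M(2) by auto
        ultimately have "A = M" using Fsub[OF AF] card_subset_eq[of M A] by simp
        then show "H = A" using H(2) M(2) by auto
      qed
      then show "A \<in> maxsimp n m F" using AS unfolding maxsimp_def by auto
    qed
  qed
  have cl: "cliques n m F = (\<lambda>A. {A}) ` F"
    unfolding cliques_def msF
  proof (rule image_cong[OF refl])
    fix A assume "A \<in> F"
    then have "A \<subseteq> {1..n}" "card A = m" using Fsub by auto
    then show "skel m A = {A}" by (rule skelA)
  qed
  have ccard: "card (cliques n m F) = card F" unfolding cl by (rule card_image) (auto simp: inj_on_def)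
  have VA: "Vtx {A} = A" for A by (simp add: Vtx_def)
  have ni: "nice m F" unfolding nice_def
  proof (intro conjI)
    show "\<forall>A\<in>F. finite A \<and> card A = m" using Fsub finite_subset by blast
    show "\<forall>A\<in>F. \<forall>B\<in>F. A \<noteq> B \<longrightarrow> card (A \<inter> B) = 1"
    proof (intro ballI impI)
      fix A B assume AB: "A \<in> F" "B \<in> F" "A \<noteq> B"
      have cc: "{A} \<in> cliques n m F" "{B} \<in> cliques n m F" "{A} \<noteq> {B}" using AB cl by auto
      have ci: "\<forall>Di\<in>cliques n m F. \<forall>Dj\<in>cliques n m F. Di \<noteq> Dj \<longrightarrow> card (Vtx Di \<inter> Vtx Dj) \<le> 1"
        using assms(3) unfolding cond_i_def .
      have gc: "\<forall>Di\<in>cliques n m F. \<forall>Dj\<in>cliques n m F. Di \<noteq> Dj \<longrightarrow> Vtx Di \<inter> Vtx Dj \<noteq> {}"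
        using assms(6) unfolding G_complete_def .
      have "card (Vtx {A} \<inter> Vtx {B}) \<le> 1" using ci[rule_format, OF cc] .
      moreover have "Vtx {A} \<inter> Vtx {B} \<noteq> {}" using gc[rule_format, OF cc] .
      ultimately have "card (A \<inter> B) \<le> 1" "A \<inter> B \<noteq> {}" unfolding VA by auto
      moreover have "finite (A \<inter> B)" using Fsub AB finite_subset by blast
      ultimately have "card (A \<inter> B) > 0" "card (A \<inter> B) \<le> 1" by (auto simp: card_gt_0_iff)
      then show "card (A \<inter> B) = 1" by linarith
    qed
    show "\<forall>A\<in>F. \<forall>B\<in>F. \<forall>C\<in>F. A \<noteq> B \<and> A \<noteq> C \<and> B \<noteq> C \<longrightarrow> A \<inter> B \<inter> C = {}"
    proof (intro ballI impI)
      fix A B C assume "A \<in> F" "B \<in> F" "C \<in> F" "A \<noteq> B \<and> A \<noteq> C \<and> B \<noteq> C"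
      then have "{A} \<in> cliques n m F" "{B} \<in> cliques n m F" "{C} \<in> cliques n m F"
        "{A} \<noteq> {B} \<and> {A} \<noteq> {C} \<and> {B} \<noteq> {C}" using cl by auto
      moreover have "\<forall>Di\<in>cliques n m F. \<forall>Dj\<in>cliques n m F. \<forall>Dk\<in>cliques n m F.
        Di \<noteq> Dj \<and> Di \<noteq> Dk \<and> Dj \<noteq> Dk \<longrightarrow> Vtx Di \<inter> Vtx Dj \<inter> Vtx Dk = {}"
        using assms(4) unfolding cond_ii_def .
      ultimately have "Vtx {A} \<inter> Vtx {B} \<inter> Vtx {C} = {}" by (meson)
      then show "A \<inter> B \<inter> C = {}" unfolding VA .
    qed
  qed
  show ?thesis unfolding ccard
  proof
    assume "is_closed n m F"
    then obtain \<sigma> where s: "bij_betw \<sigma> {1..n} {1..n}" "closed_wrt m ((`) \<sigma> ` F)"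
      unfolding is_closed_def by blast
    have "\<Union>F \<subseteq> {1..n}" using Fsub by auto
    then have "inj_on \<sigma> (\<Union>F)" using s(1) unfolding bij_betw_def by (meson inj_on_subset)
    note ni2 = nice_image[OF ni this]
    show "card F \<le> m"
    proof (rule ccontr)
      assume "\<not> card F \<le> m"
      then have "\<not> closed_wrt m ((`) \<sigma> ` F)" using notclosed[OF ni2[THEN conjunct1] _ m3] ni2 fF by simp
      then show False using s(2) by simp
    qed
  next
    assume cm: "card F \<le> m"
    have "\<forall>A\<in>F. A \<subseteq> {1..n}" using Fsub by auto
    from construct[OF ni fF this cm] show "is_closed n m F" unfolding is_closed_def .
  qed
qed

end
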